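(* For every $s\in\Sigma^n$, the arc $(s,R(s))$ is a valid arc of $B_n$ with respect to the depth assignment $d$.
   Context: Let $k\ge 2$, $\Sigma=\{0,\dots,k-1\}$ with arithmetic modulo $k$, $n\ge 1$, and $s=s[0]\cdots s[n-1]\in\Sigma^n$. The de Bruijn graph $B_n$ has node set $\Sigma^n$ and an arc $(s,t)$ iff $s[1]\cdots s[n-1]=t[0]\cdots t[n-2]$. For an integer $j$, $ICR_j(s)=s[1]\cdots s[n-1](s[0]+j)$. Let $\mathbf N$ be the set of cycles (orbits) of the permutation $ICR_1$ of $\Sigma^n$. Let $\mathbf G$ be the directed graph on $\mathbf N$ with an arc $(\mathcal U,\mathcal V)$ iff some $s\in\mathcal U$ has $ICR_0(s)\in\mathcal V$. Let $\mathbf T$ be a directed spanning tree of $\mathbf G$ rooted at $\mathcal R\in\mathbf N$ (arcs from parent to child), with parent map $parent$; the depth of a cycle is its distance from the root (root has depth $0$). For each $\mathcal U\ne\mathcal R$, a representative $rep(\mathcal U)$ is a fixed node $s\in\mathcal U$ with $ICR_0^{-1}(s)\in parent(\mathcal U)$ and $s[n-1]\equiv \text{depth}(\mathcal U)\pmod k$ (assumed to exist and fixed). $\mathrm{Reps}$ is the set of all representatives. Define $R(s)=ICR_0(s)$ if $ICR_0(s)\in\mathrm{Reps}$; $R(s)=ICR_2(s)$ if $ICR_1(s)\in\mathrm{Reps}$; $R(s)=ICR_1(s)$ otherwise. The depth assignment $d:\Sigma^n\to\Sigma$ is $d_s=p+1 \pmod k$, where $p$ is the depth in $\mathbf T$ of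 the cycle containing $s$. An arc $(s,t)$ of $B_n$ is valid if, with $b=s[0]$ and $c=t[n-1]$, either ($b+1=c$ and $d_s=d_t$) or ($b+1=d_t$ and $c=d_s$). *)

theory Defs
  imports Main
begin

definition words :: "nat \<Rightarrow> nat \<Rightarrow> nat list set" where
  "words k n = {s. length s = n \<and> (\<forall>x\<in>set s. x < k)}"

definition ICR :: "nat \<Rightarrow> nat \<Rightarrow> nat list \<Rightarrow> nat list" where
  "ICR k j s = tl s @ [(hd s + j) mod k]"

definition ICR0_inv :: "nat list \<Rightarrow> nat list" where
  "ICR0_inv s = last s # butlast s"

definition cyc :: "nat \<Rightarrow> nat list \<Rightarrow> nat list set" where
  "cyc k s = {(ICR k 1 ^^ m) s | m. True}"

definition cycles :: "nat \<Rightarrow> nat \<Rightarrow> nat list set set" where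
  "cycles k n = cyc k ` words k n"

definition G_arc :: "nat \<Rightarrow> nat list set \<Rightarrow> nat list set \<Rightarrow> bool" where
  "G_arc k U V \<longleftrightarrow> (\<exists>s\<in>U. ICR k 0 s \<in> V)"

text \<open>A directed spanning tree of G rooted at root, given by its parent map:
  every non-root cycle has a parent cycle which is a G-in-neighbour, and
  iterating the parent map from any cycle reaches the root.\<close>
definition spanning_tree ::
  "nat \<Rightarrow> nat \<Rightarrow> nat list set \<Rightarrow> (nat list set \<Rightarrow> nat list set) \<Rightarrow> bool" where
  "spanning_tree k n root parent \<longleftrightarrow>
     root \<in> cycles k n \<and>
     (\<forall>U\<in>cycles k n. U \<noteq> root \<longrightarrow>
        parent U \<in> cycles k n \<and> G_arc k (parent U) U) \<and>
     (\<forall>U\<in>cycles k n. \<exists>m. (parent ^^ m) U = root)"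

definition depth :: "nat list set \<Rightarrow> (nat list set \<Rightarrow> nat list set) \<Rightarrow> nat list set \<Rightarrow> nat" where
  "depth root parent U = (LEAST m. (parent ^^ m) U = root)"

definition valid_reps ::
  "nat \<Rightarrow> nat \<Rightarrow> nat list set \<Rightarrow> (nat list set \<Rightarrow> nat list set)
     \<Rightarrow> (nat list set \<Rightarrow> nat list) \<Rightarrow> bool" where
  "valid_reps k n root parent rep \<longleftrightarrow>
     (\<forall>U\<in>cycles k n. U \<noteq> root \<longrightarrow>
        rep U \<in> U \<and> ICR0_inv (rep U) \<in> parent U \<and>
        last (rep U) = depth root parent U mod k)"

definition Reps :: "nat \<Rightarrow> nat \<Rightarrow> nat list set \<Rightarrow> (nat list set \<Rightarrow> nat list) \<Rightarrow> nat list set" where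
  "Reps k n root rep = rep ` (cycles k n - {root})"

definition Rsucc ::
  "nat \<Rightarrow> nat \<Rightarrow> nat list set \<Rightarrow> (nat list set \<Rightarrow> nat list) \<Rightarrow> nat list \<Rightarrow> nat list" where
  "Rsucc k n root rep s =
     (if ICR k 0 s \<in> Reps k n root rep then ICR k 0 s
      else if ICR k 1 s \<in> Reps k n root rep then ICR k 2 s
      else ICR k 1 s)"

definition dassign ::
  "nat \<Rightarrow> nat list set \<Rightarrow> (nat list set \<Rightarrow> nat list set) \<Rightarrow> nat list \<Rightarrow> nat" where
  "dassign k root parent s = (depth root parent (cyc k s) + 1) mod k"

definition dB_arc :: "nat \<Rightarrow> nat \<Rightarrow> nat list \<Rightarrow> nat list \<Rightarrow> bool" where
  "dB_arc k n s t \<longleftrightarrow> s \<in> words k n \<and> t \<in> words k n \<and> tl s = butlast t"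

definition valid_arc :: "nat \<Rightarrow> nat \<Rightarrow> (nat list \<Rightarrow> nat) \<Rightarrow> nat list \<Rightarrow> nat list \<Rightarrow> bool" where
  "valid_arc k n d s t \<longleftrightarrow> dB_arc k n s t \<and>
     (let b = s ! 0; c = t ! (n - 1) in
       ((b + 1) mod k = c \<and> d s = d t) \<or> ((b + 1) mod k = d t \<and> c = d s))"

end

theory Submission
  imports Defs
begin

lemma periodic:
  assumes "finite A" "inj_on f A" "f ` A \<subseteq> A" "x \<in> A"
  shows "\<exists>p>0. (f^^p) x = x"
proof -
  have mapsA: "(f^^m) y \<in> A" if "y \<in> A" for m y
    by (induction m) (use assms that in auto)
  have inA: "(f^^i) x \<in> A" for i
    using mapsA assms(4) by blast
  have "\<not> inj_on (\<lambda>i. (f^^i) x) {0..card A}"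
  proof
    assume "inj_on (\<lambda>i. (f^^i) x) {0..card A}"
    moreover have "(\<lambda>i. (f^^i) x) ` {0..card A} \<subseteq> A" using inA by blast
    ultimately have "card {0..card A} \<le> card A" using card_inj_on_le assms(1) by blast
    then show False by simp
  qed
  then obtain i0 j0 where ij0: "i0 \<noteq> j0" "(f^^i0) x = (f^^j0) x"
    unfolding inj_on_def by blast
  obtain i j where ij: "i < j" "(f^^i) x = (f^^j) x"
  proof (cases "i0 < j0")
    case True then show ?thesis using that ij0 by blast
  next
    case False then have "j0 < i0" using ij0(1) by simp
    then show ?thesis using that ij0(2) by simp
  qed
  have injp: "inj_on (f^^m) A" for m
  proof (induction m)
    case 0 then show ?case by simp
  next
    case (Suc m)
    have "(f^^m) ` A \<subseteq> A" using mapsA by blast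
    then have "inj_on f ((f^^m) ` A)" using assms(2) by (rule inj_on_subset[rotated])
    then have "inj_on (f \<circ> f^^m) A" by (rule comp_inj_on[OF Suc.IH])
    then show ?case by (simp only: funpow.simps(2))
  qed
  have "(f^^i) ((f^^(j-i)) x) = (f^^(i + (j-i))) x"
    by (simp add: funpow_add)
  also have "i + (j - i) = j" using ij by simp
  finally have "(f^^i) ((f^^(j-i)) x) = (f^^i) x" using ij by simp
  with injp[of i] inA[of "j-i"] assms(4) have "(f^^(j-i)) x = x"
    by (simp add: inj_on_def)
  then show ?thesis using ij by (intro exI[of _ "j-i"]) auto
qed

lemma ICR_words:
  assumes "s \<in> words k n" "k > 0" "n \<ge> 1"
  shows "ICR k j s \<in> words k n"
  using assms by (cases s) (auto simp: words_def ICR_def Suc_le_eq)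

lemma suc_mod_inj:
  assumes "(a::nat) < k" "b < k" "(a+1) mod k = (b+1) mod k" shows "a = b"
proof (cases "a + 1 = k")
  case True
  then show ?thesis using assms by (cases "b + 1 = k") auto
next
  case False
  then show ?thesis using assms by (cases "b + 1 = k") auto
qed

lemma inj_ICR1: "inj_on (ICR k 1) (words k n)"
proof (rule inj_onI)
  fix s t assume s: "s \<in> words k n" and t: "t \<in> words k n" and e: "ICR k 1 s = ICR k 1 t"
  show "s = t"
  proof (cases n)
    case 0 then show ?thesis using s t by (auto simp: words_def)
  next
    case (Suc m)
    then obtain a as b bs where "s = a # as" "t = b # bs" using s t
      by (cases s; cases t) (auto simp: words_def)
    moreover have "a < k" "b < k" using s t calculation by (auto simp: words_def)
    moreover have "(a + 1) mod k = (b + 1) mod k" "as = bs" using e calculation by (auto simp: ICR_def)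
    moreover have "a = b" using suc_mod_inj calculation by blast
    ultimately show ?thesis by simp
  qed
qed

lemma finite_words: "finite (words k n)"
proof -
  have "words k n \<subseteq> {xs. set xs \<subseteq> {..<k} \<and> length xs = n}"
    by (auto simp: words_def)
  then show ?thesis using finite_lists_length_eq[of "{..<k}" n] finite_subset by blast
qed

lemma cyc_self: "s \<in> cyc k s"
  unfolding cyc_def by (auto intro: exI[of _ 0])

lemma cyc_words:
  assumes "s \<in> words k n" "k > 0" "n \<ge> 1" "y \<in> cyc k s"
  shows "y \<in> words k n"
proof -
  have "(ICR k 1 ^^ m) s \<in> words k n" for m
    by (induction m) (use assms ICR_words in auto)
  then show ?thesis using assms(4) by (auto simp: cyc_def)
qed

lemma cyc_eq:
  assumes "x \<in> words k n" "k > 0" "n \<ge> 1" "y \<in> cyc k x"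
  shows "cyc k y = cyc k x"
proof -
  let ?f = "ICR k 1"
  have "?f ` words k n \<subseteq> words k n" using ICR_words assms by blast
  then obtain p where p: "p > 0" "(?f^^p) x = x"
    using periodic[OF finite_words inj_ICR1 _ assms(1)] by blast
  have pm: "(?f^^(p*m)) x = x" for m
    by (induction m) (use p in \<open>auto simp: funpow_add\<close>)
  obtain a where a: "y = (?f^^a) x" using assms(4) by (auto simp: cyc_def)
  show ?thesis
  proof
    show "cyc k y \<subseteq> cyc k x"
      unfolding cyc_def a by (auto simp: funpow_add[symmetric] o_def) (metis comp_apply funpow_add)
  next
    show "cyc k x \<subseteq> cyc k y"
    proof
      fix z assume "z \<in> cyc k x"
      then obtain b where b: "z = (?f^^b) x" by (auto simp: cyc_def)
      have "(?f^^(b + (p - 1) * a)) y = (?f^^(b + (p-1)*a + a)) x"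
        by (simp add: a funpow_add)
      also have "b + (p-1)*a + a = b + p*a" using p
        by (metis add.assoc add.commute mult_eq_if not_gr0 mult.commute)
      also have "(?f^^(b + p*a)) x = z" by (simp only: funpow_add o_apply b pm[of a])
      finally show "z \<in> cyc k y" unfolding cyc_def by blast
    qed
  qed
qed

lemma depth_parent:
  assumes st: "spanning_tree k n root parent" and U: "U \<in> cycles k n" "U \<noteq> root"
  shows "depth root parent U = Suc (depth root parent (parent U))"
proof -
  have pU: "parent U \<in> cycles k n" using st U by (auto simp: spanning_tree_def)
  obtain m where m: "(parent^^m) U = root" using st U unfolding spanning_tree_def by blast
  obtain m' where m': "(parent^^m') (parent U) = root" using st pU unfolding spanning_tree_def by blast
  define D where "D = depth root parent (parent U)"
  have D: "(parent^^D) (parent U) = root" unfolding D_def depth_def by (rule LeastI[of _ m'], rule m')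
  have D2: "(parent^^(Suc D)) U = root" using D by (simp only: funpow_Suc_right o_apply)
  have le: "depth root parent U \<le> Suc D" unfolding depth_def by (rule Least_le, rule D2)
  have dU: "(parent^^(depth root parent U)) U = root" unfolding depth_def by (rule LeastI[of _ m], rule m)
  have "depth root parent U \<noteq> 0" using dU U by auto
  then obtain e where e: "depth root parent U = Suc e" by (cases "depth root parent U") auto
  have "(parent^^(Suc e)) U = root" using dU e by simp
  then have "(parent^^e) (parent U) = root" by (simp only: funpow_Suc_right o_apply)
  then have "D \<le> e" unfolding D_def depth_def by (rule Least_le)
  then show ?thesis using le e D_def by simp
qed

lemma cycles_elem:
  assumes "U \<in> cycles k n" "k > 0" "n \<ge> 1" "y \<in> U"
  shows "cyc k y = U" "y \<in> words k n"
  using assms cyc_eq cyc_words unfolding cycles_def by blast+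

theorem lemma12:
  fixes k n :: nat
    and root :: "nat list set"
    and parent :: "nat list set \<Rightarrow> nat list set"
    and rep :: "nat list set \<Rightarrow> nat list"
    and s :: "nat list"
  assumes "k \<ge> 2" and "n \<ge> 1"
    and "spanning_tree k n root parent"
    and "valid_reps k n root parent rep"
    and "s \<in> words k n"
  shows "valid_arc k n (dassign k root parent) s (Rsucc k n root rep s)"
proof -
  have k0: "k > 0" using assms(1) by simp
  obtain a as where s: "s = a # as" using assms(2,5) by (cases s) (auto simp: words_def)
  have ak: "a < k" using assms(5) s by (auto simp: words_def)
  have lens: "length as = n - 1" using assms(5) s by (auto simp: words_def)
  have sU: "cyc k s \<in> cycles k n" using assms(5) by (auto simp: cycles_def)
  let ?d = "dassign k root parent"
  let ?D = "depth root parent"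
  have arc: "dB_arc k n s (ICR k j s)" for j
    using assms(5) ICR_words[OF assms(5) k0 assms(2)] s by (auto simp: dB_arc_def ICR_def)
  have last_t: "ICR k j s ! (n - 1) = (a + j) mod k" for j
    using lens s by (simp add: ICR_def nth_append)
  have s0: "s ! 0 = a" using s by simp
  show ?thesis
  proof (cases "ICR k 0 s \<in> Reps k n root rep")
    case True
    then obtain V where V: "V \<in> cycles k n" "V \<noteq> root" "ICR k 0 s = rep V"
      by (auto simp: Reps_def)
    have r: "rep V \<in> V" "ICR0_inv (rep V) \<in> parent V" "last (rep V) = ?D V mod k"
      using assms(4) V by (auto simp: valid_reps_def)
    have "ICR0_inv (rep V) = s" using V(3)[symmetric] s ak by (simp add: ICR0_inv_def ICR_def)
    moreover have pV: "parent V \<in> cycles k n" using assms(3) V by (auto simp: spanning_tree_def)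
    ultimately have cs: "cyc k s = parent V" using r cycles_elem k0 assms(2) by metis
    have ct: "cyc k (ICR k 0 s) = V" using V r cycles_elem k0 assms(2) by metis
    have dV: "?D V = Suc (?D (cyc k s))" using depth_parent[OF assms(3) V(1,2)] cs by simp
    have la: "a = ?D V mod k" using r(3) V(3)[symmetric] ak s by (simp add: ICR_def)
    have "((a + 1) mod k = ?d (ICR k 0 s) \<and> (a + 0) mod k = ?d s)"
      unfolding dassign_def ct using la dV by (simp add: mod_simps)
    then show ?thesis using True arc last_t s0
      by (simp add: Rsucc_def valid_arc_def Let_def)
  next
    case F0: False
    show ?thesis
    proof (cases "ICR k 1 s \<in> Reps k n root rep")
      case True
      then obtain V where V: "V \<in> cycles k n" "V \<noteq> root" "ICR k 1 s = rep V"
        by (auto simp: Reps_def)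
      have r: "rep V \<in> V" "ICR0_inv (rep V) \<in> parent V" "last (rep V) = ?D V mod k"
        using assms(4) V by (auto simp: valid_reps_def)
      have "ICR k 1 s \<in> cyc k s" unfolding cyc_def by (auto intro: exI[of _ 1])
      then have cV: "cyc k s = V" using V r cycles_elem k0 assms(2) cyc_eq assms(5) by metis
      have pV: "parent V \<in> cycles k n" using assms(3) V by (auto simp: spanning_tree_def)
      have inv: "ICR0_inv (rep V) = ((a+1) mod k) # as" using V(3)[symmetric] s
        by (simp add: ICR0_inv_def ICR_def)
      have "ICR k 1 (((a+1) mod k) # as) = ICR k 2 s" using s by (simp add: ICR_def mod_simps)
      moreover have "ICR k 1 (((a+1) mod k) # as) \<in> cyc k (((a+1) mod k) # as)"
        unfolding cyc_def by (auto intro: exI[of _ 1])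
      ultimately have ct: "cyc k (ICR k 2 s) = parent V"
        using cycles_elem[OF pV k0 assms(2)] r(2) inv by (metis cyc_eq)
      have dV: "?D V = Suc (?D (parent V))" using depth_parent[OF assms(3) V(1,2)] by simp
      have la: "(a + 1) mod k = ?D V mod k" using r(3) V(3)[symmetric] s by (simp add: ICR_def)
      have "((a + 1) mod k = ?d (ICR k 2 s) \<and> (a + 2) mod k = ?d s)"
        unfolding dassign_def ct cV using la dV by simp (metis mod_Suc_eq)
      then show ?thesis using True F0 arc last_t s0
        by (simp add: Rsucc_def valid_arc_def Let_def)
    next
      case False
      have "ICR k 1 s \<in> cyc k s" unfolding cyc_def by (auto intro: exI[of _ 1])
      then have "cyc k (ICR k 1 s) = cyc k s" using cyc_eq k0 assms(2,5) by blast
      then show ?thesis using False F0 arc last_t s0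
        by (simp add: Rsucc_def valid_arc_def Let_def dassign_def)
    qed
  qed
qed

end
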